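(* For every finite additive poset $A$, $h(A)\le\dim(A)\le wt(A)\le w(A)$.
   Context: An additive poset is a pair $(A,\le)$ where $A$ is an abelian group and $\le$ is a partial order on $A$ such that for all $a,b,c\in A$: $(\ast)$ if $b\le a$ and $c\le a$ then $b+c\le a$; $(\ast\ast)$ if $a\le b$ and $a\le c$ then $a\le a+b+c$. Such $A$ is a $\mathbb{Z}/2\mathbb{Z}$-vector space; $\dim(A)$ is its dimension. The height $h(A)$ is the maximal length $n$ of a chain $a_0<a_1<\cdots<a_n$ in $A$; the width $w(A)$ is the maximal cardinality of an antichain (set of pairwise incomparable elements); the weight $wt(A)$ is the number of atoms, where an atom is a nonzero $a$ with $\{x:x\le a\}=\{0,a\}$. *)

theory Defs
  imports Main
begin

definition additive_poset :: "('a::ab_group_add \<Rightarrow> 'a \<Rightarrow> bool) \<Rightarrow> bool" where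
  "additive_poset le \<longleftrightarrow>
     (\<forall>a. le a a) \<and>
     (\<forall>a b. le a b \<and> le b a \<longrightarrow> a = b) \<and>
     (\<forall>a b c. le a b \<and> le b c \<longrightarrow> le a c) \<and>
     (\<forall>a b c. le b a \<and> le c a \<longrightarrow> le (b + c) a) \<and>
     (\<forall>a b c. le a b \<and> le a c \<longrightarrow> le a (a + b + c))"

definition strict :: "('a \<Rightarrow> 'a \<Rightarrow> bool) \<Rightarrow> 'a \<Rightarrow> 'a \<Rightarrow> bool" where
  "strict le a b \<longleftrightarrow> le a b \<and> a \<noteq> b"

definition height :: "('a \<Rightarrow> 'a \<Rightarrow> bool) \<Rightarrow> nat" where
  "height le = Max {n. \<exists>f::nat \<Rightarrow> 'a. \<forall>i<n. strict le (f i) (f (Suc i))}"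

definition antichain_in :: "('a \<Rightarrow> 'a \<Rightarrow> bool) \<Rightarrow> 'a set \<Rightarrow> bool" where
  "antichain_in le S \<longleftrightarrow> (\<forall>x\<in>S. \<forall>y\<in>S. x \<noteq> y \<longrightarrow> \<not> le x y \<and> \<not> le y x)"

definition width :: "('a \<Rightarrow> 'a \<Rightarrow> bool) \<Rightarrow> nat" where
  "width le = Max (card ` {S. antichain_in le S})"

definition atom :: "('a::zero \<Rightarrow> 'a \<Rightarrow> bool) \<Rightarrow> 'a \<Rightarrow> bool" where
  "atom le a \<longleftrightarrow> a \<noteq> 0 \<and> {x. le x a} = {0, a}"

definition weight :: "('a::zero \<Rightarrow> 'a \<Rightarrow> bool) \<Rightarrow> nat" where
  "weight le = card {a. atom le a}"

text \<open>Linear independence over Z/2Z: no nonempty finite subset sums to 0.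
  The dimension over Z/2Z is the maximal size of an independent set.\<close>
definition z2_independent :: "'a::comm_monoid_add set \<Rightarrow> bool" where
  "z2_independent S \<longleftrightarrow> (\<forall>T\<subseteq>S. finite T \<and> T \<noteq> {} \<longrightarrow> sum id T \<noteq> 0)"

definition z2_dim :: "'a::{comm_monoid_add,finite} itself \<Rightarrow> nat" where
  "z2_dim _ = Max (card ` {S::'a set. z2_independent S})"

end

theory Submission
  imports Defs
begin

lemma symdiff_sum:
  fixes A B :: "'a::ab_group_add set"
  assumes z: "\<And>x::'a. x + x = 0" and fA: "finite A" and fB: "finite B"
  shows "sum id ((A - B) \<union> (B - A)) = sum id A + sum id B"
proof -
  have 1: "sum id A = sum id (A - B) + sum id (A \<inter> B)"
    using fA by (metis Diff_Diff_Int Diff_subset add.commute inf.cobounded1 sum.subset_diff)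
  have 2: "sum id B = sum id (B - A) + sum id (A \<inter> B)"
    using fB by (metis Diff_Diff_Int Diff_subset add.commute inf.cobounded2 inf_commute sum.subset_diff)
  have 3: "sum id ((A - B) \<union> (B - A)) = sum id (A - B) + sum id (B - A)"
    by (rule sum.union_disjoint) (use fA fB in auto)
  have "sum id A + sum id B = sum id (A - B) + sum id (B - A) + (sum id (A \<inter> B) + sum id (A \<inter> B))"
    unfolding 1 2 by (simp add: algebra_simps)
  then show ?thesis using 3 z by simp
qed

context
  fixes le :: "'a::{ab_group_add,finite} \<Rightarrow> 'a \<Rightarrow> bool"
  assumes ap: "additive_poset le"
begin

lemma refl': "le a a" using ap unfolding additive_poset_def by blast
lemma antisym': "le a b \<Longrightarrow> le b a \<Longrightarrow> a = b" using ap unfolding additive_poset_def by blast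
lemma trans': "le a b \<Longrightarrow> le b c \<Longrightarrow> le a c" using ap unfolding additive_poset_def by blast
lemma star1: "le b a \<Longrightarrow> le c a \<Longrightarrow> le (b + c) a" using ap unfolding additive_poset_def by blast
lemma star2: "le a b \<Longrightarrow> le a c \<Longrightarrow> le a (a + b + c)" using ap unfolding additive_poset_def by blast

lemma twozero: "x + x = (0::'a)"
proof -
  have "le (x + x) x" by (rule star1) (rule refl')+
  then have "le (x + (x + x)) x" by (intro star1 refl')
  moreover have "le x (x + x + x)" by (intro star2 refl')
  ultimately have "x + (x + x) = x" by (intro antisym') (simp_all add: add.assoc)
  then show ?thesis by (metis add_right_imp_eq add.commute add_0)
qed

lemma neg_self: "- x = (x::'a)"
  using twozero[of x] by (metis add.inverse_unique)

lemma zero_le: "le 0 a"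
  using star1[OF refl' refl', of a] twozero[of a] by simp

lemma sum_le: "finite T \<Longrightarrow> \<forall>x\<in>T. le x a \<Longrightarrow> le (sum id T) a"
  by (induction T rule: finite_induct) (auto simp: zero_le intro: star1)

lemma chain_lt:
  assumes ch: "\<forall>i<n. strict le (f i) (f (Suc i))"
  shows "i < j \<Longrightarrow> j \<le> n \<Longrightarrow> le (f i) (f j) \<and> f i \<noteq> f j"
proof (induction j)
  case 0 then show ?case by simp
next
  case (Suc j)
  have s: "le (f j) (f (Suc j)) \<and> f j \<noteq> f (Suc j)" using ch Suc.prems unfolding strict_def by auto
  show ?case
  proof (cases "i = j")
    case True then show ?thesis using s by simp
  next
    case False
    then have ih: "le (f i) (f j) \<and> f i \<noteq> f j" using Suc by auto
    have "le (f i) (f (Suc j))" using ih s trans' by blast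
    moreover have "f i \<noteq> f (Suc j)"
    proof
      assume "f i = f (Suc j)"
      then have "le (f j) (f i)" using s by simp
      then show False using ih antisym' by blast
    qed
    ultimately show ?thesis by simp
  qed
qed

lemma chain_le:
  assumes ch: "\<forall>i<n. strict le (f i) (f (Suc i))"
  shows "i \<le> j \<Longrightarrow> j \<le> n \<Longrightarrow> le (f i) (f j)"
  using chain_lt[OF ch, of i j] refl' by (cases "i = j") auto

lemma fin_dim: "finite (card ` {S::'a set. z2_independent S})" by simp

lemma card_le_dim: "z2_independent (S::'a set) \<Longrightarrow> card S \<le> z2_dim TYPE('a)"
proof -
  assume "z2_independent S"
  then have "card S \<in> card ` {S::'a set. z2_independent S}" by blast
  then show ?thesis unfolding z2_dim_def using fin_dim by (rule Max_ge[rotated])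
qed

lemma chain_bound:
  assumes ch: "\<forall>i<n. strict le (f i) (f (Suc i))"
  shows "n \<le> z2_dim TYPE('a)"
proof -
  define S where "S = f ` {1..n}"
  have inj: "inj_on f {1..n}"
  proof (rule inj_onI)
    fix x y assume "x \<in> {1..n}" "y \<in> {1..n}" "f x = f y"
    then show "x = y" using chain_lt[OF ch, of x y] chain_lt[OF ch, of y x]
      by (cases x y rule: linorder_cases) auto
  qed
  have cS: "card S = n" unfolding S_def using card_image[OF inj] by simp
  have "z2_independent S"
    unfolding z2_independent_def
  proof (intro allI impI)
    fix T assume T1: "T \<subseteq> S" and T2: "finite T \<and> T \<noteq> {}"
    from T1 T2 have T: "T \<subseteq> S \<and> finite T \<and> T \<noteq> {}" by simp
    define I where "I = {i\<in>{1..n}. f i \<in> T}"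
    have TI: "T = f ` I" using T unfolding I_def S_def by auto
    have Ine: "I \<noteq> {}" "finite I" using T TI unfolding I_def by auto
    define m where "m = Max I"
    have mI: "m \<in> I" using Ine m_def by simp
    have m1: "1 \<le> m" "m \<le> n" using mI I_def by auto
    have fmT: "f m \<in> T" using mI I_def by simp
    have rest: "\<forall>x\<in>T - {f m}. le x (f (m - 1))"
    proof
      fix x assume "x \<in> T - {f m}"
      then obtain i where i: "i \<in> I" "x = f i" "i \<noteq> m" using TI by auto
      have "i \<le> m" using i Ine m_def by simp
      then have "i \<le> m - 1" using i by simp
      then show "le x (f (m - 1))" using chain_le[OF ch, of i "m - 1"] m1 i by simp
    qed
    have sr: "le (sum id (T - {f m})) (f (m - 1))" using sum_le rest T by simp
    have split: "sum id T = f m + sum id (T - {f m})"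
      using T fmT by (simp add: sum.remove)
    show "sum id T \<noteq> 0"
    proof
      assume "sum id T = 0"
      then have "f m = - sum id (T - {f m})" using split by (simp add: eq_neg_iff_add_eq_0)
      then have "f m = sum id (T - {f m})" using neg_self by simp
      then have "le (f m) (f (m - 1))" using sr by simp
      moreover have "le (f (m - 1)) (f m) \<and> f (m - 1) \<noteq> f m"
        using chain_lt[OF ch, of "m - 1" m] m1 by simp
      ultimately show False using antisym' by blast
    qed
  qed
  then show ?thesis using card_le_dim cS by auto
qed

lemma height_bound: "height le \<le> z2_dim TYPE('a)"
proof -
  let ?H = "{n. \<exists>f::nat \<Rightarrow> 'a. \<forall>i<n. strict le (f i) (f (Suc i))}"
  have b: "\<forall>n\<in>?H. n \<le> z2_dim TYPE('a)" using chain_bound by blast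
  then have "finite ?H" using finite_nat_set_iff_bounded_le by blast
  moreover have "0 \<in> ?H" by simp
  ultimately show ?thesis unfolding height_def using b by (subst Max_le_iff) auto
qed

lemma weight_width: "weight le \<le> width le"
proof -
  have "antichain_in le {a. atom le a}"
    unfolding antichain_in_def atom_def by blast
  then show ?thesis unfolding weight_def width_def by (intro Max_ge) auto
qed

lemma atoms_span: "\<exists>T \<subseteq> {a. atom le a}. a = sum id T"
proof (induction a rule: measure_induct_rule[of "\<lambda>a. card {x. le x a}"])
  case (less a)
  show ?case
  proof (cases "a = 0 \<or> atom le a")
    case True
    then show ?thesis
    proof
      assume "a = 0" then show ?thesis by (intro exI[of _ "{}"]) simp
    next
      assume "atom le a" then show ?thesis by (intro exI[of _ "{a}"]) simp
    qed
  next
    case False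
    then have "{x. le x a} \<noteq> {0, a}" "a \<noteq> 0" unfolding atom_def by auto
    moreover have "{0, a} \<subseteq> {x. le x a}" using zero_le refl' by auto
    ultimately obtain b where b: "le b a" "b \<noteq> 0" "b \<noteq> a" by blast
    define c where "c = a + b"
    have c: "le c a" "c \<noteq> a" using star1[OF refl' b(1)] b(2) unfolding c_def by auto
    have abc: "a = b + c" unfolding c_def using twozero[of b] by (simp add: algebra_simps)
    have lt: "card {x. le x d} < card {x. le x a}" if "le d a" "d \<noteq> a" for d
    proof (rule psubset_card_mono)
      show "{x. le x d} \<subset> {x. le x a}"
        using that trans' antisym' refl' by blast
    qed simp
    obtain Tb where Tb: "Tb \<subseteq> {a. atom le a}" "b = sum id Tb" using less lt b by blast
    obtain Tc where Tc: "Tc \<subseteq> {a. atom le a}" "c = sum id Tc" using less lt c by blast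
    have "sum id ((Tb - Tc) \<union> (Tc - Tb)) = b + c"
      using symdiff_sum[OF twozero, of Tb Tc] Tb Tc by simp
    then show ?thesis using abc Tb Tc by (intro exI[of _ "(Tb - Tc) \<union> (Tc - Tb)"]) auto
  qed
qed

lemma indep_bound:
  assumes S: "z2_independent (S::'a set)"
  shows "card S \<le> weight le"
proof -
  let ?M = "{a. atom le a}"
  have "inj_on (sum id) (Pow S)"
  proof (rule inj_onI)
    fix T1 T2 assume T: "T1 \<in> Pow S" "T2 \<in> Pow S" "sum id T1 = sum id T2"
    have "sum id ((T1 - T2) \<union> (T2 - T1)) = sum id T1 + sum id T2"
      using symdiff_sum[OF twozero, of T1 T2] by simp
    also have "\<dots> = 0" using T twozero by simp
    finally have z: "sum id ((T1 - T2) \<union> (T2 - T1)) = 0" .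
    have "(T1 - T2) \<union> (T2 - T1) \<subseteq> S" using T by auto
    moreover have "finite ((T1 - T2) \<union> (T2 - T1))" by simp
    ultimately have "(T1 - T2) \<union> (T2 - T1) = {}"
      using S z unfolding z2_independent_def by metis
    then show "T1 = T2" by blast
  qed
  then have "card (Pow S) \<le> card (UNIV :: 'a set)"
    by (intro card_inj_on_le) auto
  then have 1: "2 ^ card S \<le> card (UNIV :: 'a set)" by (simp add: card_Pow)
  have "(UNIV :: 'a set) \<subseteq> sum id ` Pow ?M" using atoms_span by blast
  then have "card (UNIV :: 'a set) \<le> card (sum id ` Pow ?M)" by (intro card_mono) auto
  also have "\<dots> \<le> card (Pow ?M)" by (rule card_image_le) simp
  finally have "card (UNIV :: 'a set) \<le> 2 ^ card ?M" by (simp add: card_Pow)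
  then have "(2::nat) ^ card S \<le> 2 ^ card ?M" using 1 by linarith
  then show ?thesis unfolding weight_def by simp
qed

lemma dim_weight: "z2_dim TYPE('a) \<le> weight le"
proof -
  have "{} \<in> {S::'a set. z2_independent S}" unfolding z2_independent_def by simp
  then show ?thesis unfolding z2_dim_def
    by (intro Max.boundedI fin_dim) (auto intro: indep_bound)
qed

end

theorem theorem7p1:
  fixes le :: "'a::{ab_group_add,finite} \<Rightarrow> 'a \<Rightarrow> bool"
  assumes "additive_poset le"
  shows "height le \<le> z2_dim TYPE('a) \<and> z2_dim TYPE('a) \<le> weight le \<and> weight le \<le> width le"
  using height_bound[OF assms] dim_weight[OF assms] weight_width[OF assms] by simp

end
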